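(* Let $\mathcal{L} = \prod_{i=1}^{r} C(n_i)$ be a product of chain lattices (a square lattice), let $\beta = (\rho, \ldots, \rho, b, \rho, \ldots, \rho)$ where $b$ is the maximal element of the factor $C(n_i)$ in some position $i$ and every other coordinate is the minimum $\rho$ of its chain (so $\beta$ is a maximal join-irreducible element of $\mathcal{L}$), let $B_\beta = \mathcal{L} \setminus \mathcal{L}_\beta = \{\gamma \in \mathcal{L} : \gamma \geq \beta\}$, and let $\alpha \in \mathcal{L}_\beta$. Then \[ |E_\alpha| - |E_\alpha(\mathcal{L}_\beta)| \geq |B_\beta| - 1. \]
   Context: $C(n)$ is the chain (totally ordered) lattice with $n$ elements; the product carries the componentwise order. $\mathcal{L}_\beta = \{\gamma \in \mathcal{L} : \gamma \not\geq \beta\}$ (the pruning of $\mathcal{L}$ at $\beta$, i.e. the lattice of hereditary subsets of the join-irreducible poset with $\beta$ removed). A diamond in a lattice $\mathcal{M}$ is a set $\{x, y, x\vee y, x\wedge y\}$ with $x, y \in \mathcal{M}$ non-comparable. For $\alpha \in \mathcal{M}$, $E_\alpha(\mathcal{M}) = \{(\alpha,\gamma) : \text{some diamond of } \mathcal{M} \text{ contains both } \alpha \text{ and } \gamma\}$, and $E_\alpha = E_\alpha(\mathcal{L})$. *)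

theory Defs
  imports Main
begin

text \<open>The product lattice C(n_0) x ... x C(n_{r-1}) of chains, where C(m) = {0,...,m-1}.
  Elements are functions nat => nat, vanishing outside {0..<r}; the order, join and meet
  are the pointwise ones inherited from the function lattice.\<close>
definition chain_prod :: "(nat \<Rightarrow> nat) \<Rightarrow> nat \<Rightarrow> (nat \<Rightarrow> nat) set" where
  "chain_prod n r = {x. (\<forall>i<r. x i < n i) \<and> (\<forall>i. r \<le> i \<longrightarrow> x i = 0)}"

definition pruning :: "('a::order) set \<Rightarrow> 'a \<Rightarrow> 'a set" where
  "pruning L b = {g \<in> L. \<not> b \<le> g}"

definition diamonds :: "('a::lattice) set \<Rightarrow> 'a set set" where
  "diamonds M = {{x, y, sup x y, inf x y} | x y. x \<in> M \<and> y \<in> M \<and> \<not> x \<le> y \<and> \<not> y \<le> x}"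

definition E_set :: "('a::lattice) set \<Rightarrow> 'a \<Rightarrow> ('a \<times> 'a) set" where
  "E_set M a = {(a, g) | g. \<exists>D \<in> diamonds M. a \<in> D \<and> g \<in> D}"

end

theory Submission
  imports Defs "HOL-Library.FuncSet"
begin

lemma finite_chain_prod: "finite (chain_prod n r)"
proof -
  have "chain_prod n r \<subseteq> (\<lambda>f j. if j < r then f j else 0) ` (PiE {..<r} (\<lambda>j. {..<n j}))"
  proof
    fix x assume x: "x \<in> chain_prod n r"
    let ?f = "restrict x {..<r}"
    have "?f \<in> PiE {..<r} (\<lambda>j. {..<n j})" using x by (auto simp: chain_prod_def)
    moreover have "x = (\<lambda>j. if j < r then ?f j else 0)"
      using x by (auto simp: chain_prod_def fun_eq_iff)
    ultimately show "x \<in> (\<lambda>f j. if j < r then f j else 0) ` (PiE {..<r} (\<lambda>j. {..<n j}))"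
      by blast
  qed
  moreover have "finite (PiE {..<r} (\<lambda>j. {..<n j}))" by (rule finite_PiE) auto
  ultimately show ?thesis using finite_subset by blast
qed


lemma diam_mono: "M \<subseteq> N \<Longrightarrow> diamonds M \<subseteq> diamonds N"
  unfolding diamonds_def by fast
lemma E_mono: "M \<subseteq> N \<Longrightarrow> E_set M a \<subseteq> E_set N a"
  using diam_mono[of M N] unfolding E_set_def by fast
lemma chain_prod_sup: "x \<in> chain_prod n r \<Longrightarrow> y \<in> chain_prod n r \<Longrightarrow> sup x y \<in> chain_prod n r"
  by (simp add: chain_prod_def sup_fun_def sup_nat_def)
lemma chain_prod_inf: "x \<in> chain_prod n r \<Longrightarrow> y \<in> chain_prod n r \<Longrightarrow> inf x y \<in> chain_prod n r"
  by (simp add: chain_prod_def inf_fun_def inf_nat_def less_imp_le_nat min.strict_coboundedI1)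
lemma diam_sub: "D \<in> diamonds (chain_prod n r) \<Longrightarrow> D \<subseteq> chain_prod n r"
  unfolding diamonds_def by (auto intro: chain_prod_sup chain_prod_inf)
lemma E_sub: "E_set (chain_prod n r) a \<subseteq> {a} \<times> chain_prod n r"
  unfolding E_set_def using diam_sub by fast

lemma diamondI: "x \<in> M \<Longrightarrow> y \<in> M \<Longrightarrow> \<not> x \<le> y \<Longrightarrow> \<not> y \<le> x \<Longrightarrow> {x, y, sup x y, inf x y} \<in> diamonds M"
  unfolding diamonds_def mem_Collect_eq by (intro exI[of _ x] exI[of _ y]) simp

lemma diamondE: "D \<in> diamonds M \<Longrightarrow> (\<And>x y. D = {x, y, sup x y, inf x y} \<Longrightarrow> x \<in> M \<Longrightarrow> y \<in> M \<Longrightarrow> P) \<Longrightarrow> P"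
  unfolding diamonds_def by auto

lemma E_setI: "D \<in> diamonds M \<Longrightarrow> a \<in> D \<Longrightarrow> g \<in> D \<Longrightarrow> (a, g) \<in> E_set M a"
  unfolding E_set_def by auto

lemma E_setE: "(a, g) \<in> E_set M a \<Longrightarrow> (\<And>D. D \<in> diamonds M \<Longrightarrow> g \<in> D \<Longrightarrow> P) \<Longrightarrow> P"
  unfolding E_set_def by auto

theorem mainTheorem10:
  fixes n :: "nat \<Rightarrow> nat" and r i :: nat and \<alpha> \<beta> :: "nat \<Rightarrow> nat"
  assumes "\<forall>j<r. 1 \<le> n j"
    and "i < r"
    and "\<beta> = (\<lambda>j. if j = i then n i - 1 else 0)"
    and "\<alpha> \<in> pruning (chain_prod n r) \<beta>"
  shows "int (card (E_set (chain_prod n r) \<alpha>)) - int (card (E_set (pruning (chain_prod n r) \<beta>) \<alpha>))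
           \<ge> int (card {g \<in> chain_prod n r. \<beta> \<le> g}) - 1"
proof -
  let ?L = "chain_prod n r"
  let ?P = "pruning ?L \<beta>"
  let ?B = "{g \<in> ?L. \<beta> \<le> g}"
  define g0 where "g0 = \<alpha>(i := n i - 1)"
  have aL: "\<alpha> \<in> ?L" and nb: "\<not> \<beta> \<le> \<alpha>" using assms(4) by (auto simp: pruning_def)
  have ai: "\<alpha> i < n i - 1"
  proof (rule ccontr)
    assume "\<not> ?thesis"
    hence "\<beta> \<le> \<alpha>" using assms(3) by (auto simp: le_fun_def)
    thus False using nb by simp
  qed
  have key: "(\<alpha>, g) \<in> E_set ?L \<alpha> - E_set ?P \<alpha>" if g: "g \<in> ?B - {g0}" for g
  proof -
    have gL: "g \<in> ?L" and bg: "\<beta> \<le> g" "g \<noteq> g0" using g by auto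
    have gi: "g i \<ge> n i - 1" using bg(1) assms(3) by (auto simp: le_fun_def dest: spec[of _ i])
    have gnP: "g \<notin> ?P" using bg by (auto simp: pruning_def)
    have ngla: "\<not> g \<le> \<alpha>"
    proof
      assume "g \<le> \<alpha>"
      hence "g i \<le> \<alpha> i" by (simp add: le_fun_def)
      thus False using gi ai by linarith
    qed
    have inL: "(\<alpha>, g) \<in> E_set ?L \<alpha>"
    proof (cases "\<alpha> \<le> g")
      case False
      have "{\<alpha>, g, sup \<alpha> g, inf \<alpha> g} \<in> diamonds ?L"
        using aL gL False ngla by (rule diamondI)
      thus ?thesis by (rule E_setI) auto
    next
      case True
      obtain j where j: "g j \<noteq> g0 j" using bg(2) by (auto simp: fun_eq_iff)
      have ji: "j \<noteq> i" using j gi True ai assms(1,2) gL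
        by (auto simp: g0_def chain_prod_def)
      have jr: "j < r"
      proof (rule ccontr)
        assume "\<not> j < r"
        hence "g j = 0" "\<alpha> j = 0" using gL aL by (auto simp: chain_prod_def)
        thus False using j ji by (simp add: g0_def)
      qed
      have gj: "g j > \<alpha> j" using j ji True by (auto simp: g0_def le_fun_def dest: spec[of _ j])
      define x where "x = \<alpha>(i := g i)"
      define y where "y = g(i := \<alpha> i)"
      have xL: "x \<in> ?L" using aL gL assms(2) by (auto simp: x_def chain_prod_def)
      have yL: "y \<in> ?L" using aL gL assms(2) by (auto simp: y_def chain_prod_def)
      have nxy: "\<not> x \<le> y" using gi ai by (auto simp: x_def y_def le_fun_def dest: spec[of _ i])
      have nyx: "\<not> y \<le> x" using gj ji by (auto simp: x_def y_def le_fun_def dest!: spec[of _ j])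
      have s: "sup x y = g" using True by (auto simp: x_def y_def sup_fun_def le_fun_def fun_eq_iff sup_absorb1 sup_absorb2)
      have t: "inf x y = \<alpha>" using True by (auto simp: x_def y_def inf_fun_def le_fun_def fun_eq_iff inf_absorb1 inf_absorb2)
      have "{x, y, sup x y, inf x y} \<in> diamonds ?L"
        using xL yL nxy nyx by (rule diamondI)
      hence "{x, y, g, \<alpha>} \<in> diamonds ?L" using s t by simp
      thus ?thesis by (rule E_setI) auto
    qed
    have "(\<alpha>, g) \<notin> E_set ?P \<alpha>"
    proof
      assume "(\<alpha>, g) \<in> E_set ?P \<alpha>"
      then obtain D where "D \<in> diamonds ?P" "g \<in> D" by (rule E_setE)
      obtain x y where "D = {x, y, sup x y, inf x y}" "x \<in> ?P" "y \<in> ?P"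
        using \<open>D \<in> diamonds ?P\<close> by (rule diamondE)
      hence "g = x \<or> g = y \<or> g = sup x y \<or> g = inf x y" using \<open>g \<in> D\<close> by auto
      moreover have "\<not> \<beta> \<le> x" "\<not> \<beta> \<le> y" using \<open>x \<in> ?P\<close> \<open>y \<in> ?P\<close> by (auto simp: pruning_def)
      moreover have "\<beta> \<le> sup x y \<Longrightarrow> False"
      proof -
        assume "\<beta> \<le> sup x y"
        hence "\<beta> i \<le> sup x y i" by (rule le_funD)
        hence "max (x i) (y i) \<ge> n i - 1" using assms(3) by (simp add: sup_fun_def sup_nat_def)
        hence "x i \<ge> n i - 1 \<or> y i \<ge> n i - 1" by linarith
        thus False using \<open>\<not> \<beta> \<le> x\<close> \<open>\<not> \<beta> \<le> y\<close> assms(3) by (auto simp: le_fun_def split: if_splits)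
      qed
      moreover have "\<beta> \<le> inf x y \<Longrightarrow> False"
        using \<open>\<not> \<beta> \<le> x\<close> by (meson inf_le1 order_trans)
      ultimately show False using bg(1) by auto
    qed
    thus ?thesis using inL by blast
  qed
  have finL: "finite (E_set ?L \<alpha>)" using E_sub finite_chain_prod
    by (meson finite_SigmaI finite.emptyI finite_insert finite_subset)
  have sub: "E_set ?P \<alpha> \<subseteq> E_set ?L \<alpha>" by (rule E_mono) (auto simp: pruning_def)
  have "(\<lambda>g. (\<alpha>, g)) ` (?B - {g0}) \<subseteq> E_set ?L \<alpha> - E_set ?P \<alpha>" using key by blast
  hence "card ((\<lambda>g. (\<alpha>, g)) ` (?B - {g0})) \<le> card (E_set ?L \<alpha> - E_set ?P \<alpha>)"
    using finL by (intro card_mono) auto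
  moreover have "card ((\<lambda>g. (\<alpha>, g)) ` (?B - {g0})) = card (?B - {g0})"
    by (rule card_image) (auto simp: inj_on_def)
  moreover have "card (?B - {g0}) \<ge> card ?B - 1" using diff_card_le_card_Diff[of "{g0}" ?B] by simp
  moreover have "card (E_set ?L \<alpha> - E_set ?P \<alpha>) = card (E_set ?L \<alpha>) - card (E_set ?P \<alpha>)"
    using sub finL by (simp add: card_Diff_subset finite_subset)
  moreover have "card (E_set ?P \<alpha>) \<le> card (E_set ?L \<alpha>)" using sub finL by (rule card_mono[rotated])
  ultimately show ?thesis by linarith
qed

end
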